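(* Let $p\ge2$ be an integer. For $k\ge0$ and $1\le t\le p-1$ define \[ \gamma_{k,t}=\frac{1}{t(k+p)^{2p/(3p+1)}},\qquad \theta_{k,t}=\frac{\prod_{1\le s\le p-1,\,s\neq t}\big(1-s(k+p)^{2p/(3p+1)}\big)}{t(k+p)^{2p/(3p+1)}\prod_{1\le s\le p-1,\,s\neq t}\big((t-s)(k+p)^{2p/(3p+1)}\big)},\qquad p_k=(k+p)^{(p-1)/(3p+1)}. \] Then for all $k\ge0$: $\sum_{t=1}^{p-1}\theta_{k,t}/\gamma_{k,t}^{j}=1$ for $j=1,\dots,p-1$; \[ \sum_{t=1}^{p-1}\theta_{k,t}\in\Big[\frac{1}{2(k+p)^{2p/(3p+1)}},\ \frac{\ln(2p-1)}{(k+p)^{2p/(3p+1)}}\Big]\subset(0,1);\qquad \theta_{k,t}^2\le\frac{16((p-1)!)^2}{t^2(k+p)^{4p/(3p+1)}}\ \ (1\le t\le p-1); \] and $\big(1-\sum_{t=1}^{p-1}\theta_{k,t}\big)p_{k+1}\le\big(1-\frac{1}{p+1}\sum_{t=1}^{p-1}\theta_{k,t}\big)p_k$.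
   Context: An empty product equals $1$. *)

theory Defs
  imports Complex_Main
begin

definition aa :: "nat \<Rightarrow> nat \<Rightarrow> real" where
  "aa p k = (real k + real p) powr (2 * real p / (3 * real p + 1))"

definition gam :: "nat \<Rightarrow> nat \<Rightarrow> nat \<Rightarrow> real" where
  "gam p k t = 1 / (real t * aa p k)"

definition theta :: "nat \<Rightarrow> nat \<Rightarrow> nat \<Rightarrow> real" where
  "theta p k t =
     (\<Prod>s\<in>{1..p-1} - {t}. (1 - real s * aa p k)) /
     (real t * aa p k * (\<Prod>s\<in>{1..p-1} - {t}. ((real t - real s) * aa p k)))"

definition pseq :: "nat \<Rightarrow> nat \<Rightarrow> real" where
  "pseq p k = (real k + real p) powr ((real p - 1) / (3 * real p + 1))"

end

theory Submission
  imports Defs "HOL-Analysis.Complex_Transcendental" "HOL-Computational_Algebra.Polynomial"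
begin


lemma ln_lb: fixes x :: real assumes "0 \<le> x" shows "2*x/(2+x) \<le> ln (1+x)"
proof -
  let ?f = "\<lambda>y::real. ln (1+y) - 2*y/(2+y)"
  have "?f 0 \<le> ?f x"
  proof (rule DERIV_nonneg_imp_nondecreasing[OF assms])
    fix y :: real assume y: "0 \<le> y" "y \<le> x"
    have "DERIV ?f y :> (1/(1+y) - (2*(2+y) - 2*y)/(2+y)^2)"
      using y by (auto intro!: derivative_eq_intros simp: power2_eq_square)
    moreover have "1/(1+y) - (2*(2+y) - 2*y)/(2+y)^2 = y^2/((1+y)*(2+y)^2)"
    proof -
      have "1+y > 0" "2+y>0" using y by auto
      thus ?thesis by (simp add: divide_simps power2_eq_square) (simp add: algebra_simps)
    qed
    moreover have "y^2/((1+y)*(2+y)^2) \<ge> 0" using y by simp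
    ultimately show "\<exists>d. DERIV ?f y :> d \<and> 0 \<le> d" by metis
  qed
  thus ?thesis by simp
qed

lemma harm_bound: "(\<Sum>s=1..n. 1 / real s) \<le> ln (2 * real n + 1)"
proof (induction n)
  case 0 then show ?case by simp
next
  case (Suc n)
  have x: "0 \<le> 2 / (2 * real n + 1)" by simp
  have pos: "2 * real n + 1 > 0" "4 + (real n * 12 + real n * (real n * 8)) > 0" by (auto intro!: add_pos_nonneg)
  have "1 / real (Suc n) = 2*(2 / (2 * real n + 1)) / (2 + 2 / (2 * real n + 1))"
    using pos by (simp add: field_simps)
  also have "\<dots> \<le> ln (1 + 2 / (2 * real n + 1))" by (rule ln_lb[OF x])
  also have "\<dots> = ln (2 * real (Suc n) + 1) - ln (2 * real n + 1)"
  proof -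
    have "1 + 2 / (2 * real n + 1) = (2 * real (Suc n) + 1) / (2 * real n + 1)"
      using pos by (simp add: field_simps)
    thus ?thesis using pos by (simp add: ln_div)
  qed
  finally show ?case using Suc by simp
qed

lemma ln_div_e: fixes z :: real assumes "0 < z" shows "ln z \<le> z / exp 1"
proof -
  have "ln (z / exp 1) \<le> z / exp 1 - 1" using assms by (intro ln_le_minus_one) simp
  thus ?thesis using assms by (simp add: ln_div)
qed



lemma lagrange:
  fixes x :: "nat \<Rightarrow> real" and q :: "real poly"
  assumes fin: "finite I" and inj: "inj_on x I" and deg: "degree q < card I"
  shows "(\<Sum>t\<in>I. poly q (x t) * (\<Prod>s\<in>I-{t}. (y - x s)/(x t - x s))) = poly q y"
proof -
  define L where "L = (\<Sum>t\<in>I. smult (poly q (x t) / (\<Prod>s\<in>I-{t}. (x t - x s))) (\<Prod>s\<in>I-{t}. [:-x s,1:]))"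
  have polyL: "poly L z = (\<Sum>t\<in>I. poly q (x t) * (\<Prod>s\<in>I-{t}. (z - x s)/(x t - x s)))" for z
    unfolding L_def by (simp add: poly_sum poly_prod prod_dividef)
  have degL: "degree L \<le> card I - 1"
    unfolding L_def
  proof (rule degree_sum_le[OF fin])
    fix t assume t: "t \<in> I"
    have "degree (\<Prod>s\<in>I-{t}. [:-x s,1:]) \<le> (\<Sum>s\<in>I-{t}. degree [:-x s,1:])"
      using degree_prod_sum_le[of "I-{t}" "\<lambda>s. [:-x s,1:]"] fin by (simp add: o_def)
    also have "\<dots> = card I - 1" using fin t by simp
    finally show "degree (smult (poly q (x t) / (\<Prod>s\<in>I-{t}. (x t - x s))) (\<Prod>s\<in>I-{t}. [:-x s,1:])) \<le> card I - 1"
      using degree_smult_le order_trans by blast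
  qed
  have eq: "poly L z = poly q z" if z: "z \<in> x ` I" for z
  proof -
    obtain u where u: "u \<in> I" "z = x u" using z by auto
    have "poly L z = poly q (x u) * (\<Prod>s\<in>I-{u}. (x u - x s)/(x u - x s)) +
        (\<Sum>t\<in>I-{u}. poly q (x t) * (\<Prod>s\<in>I-{t}. (x u - x s)/(x t - x s)))"
      unfolding polyL u(2) using fin u(1) by (simp add: sum.remove)
    also have "(\<Sum>t\<in>I-{u}. poly q (x t) * (\<Prod>s\<in>I-{t}. (x u - x s)/(x t - x s))) = 0"
    proof (rule sum.neutral, intro ballI)
      fix t assume t: "t \<in> I - {u}"
      have "(\<Prod>s\<in>I-{t}. (x u - x s)/(x t - x s)) = 0"
        using fin t u(1) by (intro prod_zero) auto
      thus "poly q (x t) * (\<Prod>s\<in>I-{t}. (x u - x s)/(x t - x s)) = 0" by simp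
    qed
    also have "(\<Prod>s\<in>I-{u}. (x u - x s)/(x u - x s)) = 1"
    proof (rule prod.neutral, intro ballI)
      fix s assume s: "s \<in> I - {u}"
      hence "x u \<noteq> x s" using inj u(1) by (auto dest: inj_onD)
      thus "(x u - x s)/(x u - x s) = 1" by simp
    qed
    finally show ?thesis using u by simp
  qed
  have cardI: "card (x ` I) = card I" using card_image[OF inj] .
  have "L = q"
    by (rule poly_eqI_degree[of "x ` I"]) (use eq degL deg cardI in auto)
  thus ?thesis using polyL[of y] by simp
qed




lemma union_bound:
  fixes u :: "nat \<Rightarrow> real"
  assumes "finite A" "\<And>s. s \<in> A \<Longrightarrow> 0 \<le> u s \<and> u s \<le> 1"
  shows "1 - (\<Prod>s\<in>A. 1 - u s) \<le> (\<Sum>s\<in>A. u s)"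
  using assms
proof (induction A rule: finite_induct)
  case empty then show ?case by simp
next
  case (insert x F)
  have P: "0 \<le> (\<Prod>s\<in>F. 1 - u s)" "(\<Prod>s\<in>F. 1 - u s) \<le> 1"
    using insert by (auto intro!: prod_nonneg prod_le_1)
  have ux: "0 \<le> u x" "u x \<le> 1" using insert by auto
  have IH: "1 - (\<Prod>s\<in>F. 1 - u s) \<le> (\<Sum>s\<in>F. u s)" using insert by auto
  have "u x * (\<Prod>s\<in>F. 1 - u s) \<le> u x" using P ux by (simp add: mult_left_le)
  then show ?case using insert IH by (simp add: algebra_simps)
qed

lemma main_k:
  fixes p k :: nat
  assumes p2: "p \<ge> 2"
  defines "m \<equiv> real k + real p"
  defines "e \<equiv> 2 * real p / (3 * real p + 1)"
  defines "a \<equiv> m powr e"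
  defines "S \<equiv> (\<Sum>t=1..p-1. theta p k t)"
  shows "(\<forall>j\<in>{1..p-1}. (\<Sum>t=1..p-1. theta p k t / (gam p k t) ^ j) = 1)
   \<and> 1 / (2 * a) \<le> S \<and> S \<le> ln (2 * real p - 1) / a
   \<and> 0 < 1 / (2 * a) \<and> ln (2 * real p - 1) / a < 1
   \<and> (\<forall>t\<in>{1..p-1}. (theta p k t)\<^sup>2 \<le>
        16 * (fact (p - 1))\<^sup>2 / ((real t)\<^sup>2 * m powr (4 * real p / (3 * real p + 1))))
   \<and> (1 - S) * pseq p (k + 1) \<le> (1 - S / (real p + 1)) * pseq p k"
proof -
  have m2: "m \<ge> 2" using p2 unfolding m_def by simp
  have e0: "0 < e" "e < 1" using p2 unfolding e_def by (auto simp: field_simps)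
  have e47: "4/7 \<le> e" using p2 unfolding e_def by (auto simp: field_simps)
  have a1: "a > 1" unfolding a_def using m2 e0 powr_less_mono[of 0 e m] by simp
  have am: "a \<le> m" unfolding a_def using m2 e0 powr_mono[of e 1 m] by simp
  have aa: "aa p k = a" unfolding aa_def a_def m_def e_def ..
  define x where "x s = real s * a" for s :: nat
  have x0: "x 0 = 0" unfolding x_def by simp
  have injx: "inj_on x I" for I using a1 unfolding x_def by (auto intro!: inj_onI)
  have thetaL: "theta p k t = (\<Prod>s\<in>{1..p-1}-{t}. (1 - x s)/(x t - x s)) / x t" for t
    unfolding theta_def aa x_def
    by (simp add: prod_dividef left_diff_distrib)
  have xpos: "x t > 0" if "t \<in> {1..p-1}" for t using that a1 unfolding x_def by auto
  have part1: "\<forall>j\<in>{1..p-1}. (\<Sum>t=1..p-1. theta p k t / (gam p k t) ^ j) = 1"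
  proof
    fix j assume j: "j \<in> {1..p-1}"
    have "(\<Sum>t=1..p-1. theta p k t / gam p k t ^ j) = (\<Sum>t\<in>{1..p-1}. poly (monom 1 (j-1)) (x t) * (\<Prod>s\<in>{1..p-1}-{t}. (1 - x s)/(x t - x s)))"
    proof (rule sum.cong[OF refl])
      fix t assume t: "t \<in> {1..p-1}"
      have xt: "x t > 0" using xpos[OF t] .
      have "gam p k t = 1 / x t" unfolding gam_def aa x_def ..
      then have "theta p k t / gam p k t ^ j = theta p k t * x t ^ j" by (simp add: power_one_over)
      also have "x t ^ j = x t * x t ^ (j - 1)" using j by (cases j) auto
      finally show "theta p k t / gam p k t ^ j = poly (monom 1 (j-1)) (x t) * (\<Prod>s\<in>{1..p-1}-{t}. (1 - x s)/(x t - x s))"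
        using xt unfolding thetaL by (simp add: poly_monom)
    qed
    also have "\<dots> = poly (monom 1 (j-1)) 1"
      by (rule lagrange) (use injx j in \<open>auto simp: degree_monom_eq\<close>)
    finally show "(\<Sum>t=1..p-1. theta p k t / (gam p k t) ^ j) = 1" by (simp add: poly_monom)
  qed
  define P where "P = (\<Prod>s\<in>{1..p-1}. 1 - 1 / x s)"
  have SP: "S + P = 1"
  proof -
    have lag0: "(\<Sum>t\<in>{0..p-1}. poly 1 (x t) * (\<Prod>s\<in>{0..p-1}-{t}. (1 - x s)/(x t - x s))) = poly 1 1"
      by (rule lagrange) (use injx p2 in auto)
    have ins: "{0..p-1} = insert 0 {1..p-1}" by auto
    have t0: "(\<Prod>s\<in>{0..p-1}-{0}. (1 - x s)/(x 0 - x s)) = P"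
    proof -
      have "{0..p-1}-{0} = {1..p-1}" by auto
      moreover have "(1 - x s)/(x 0 - x s) = 1 - 1 / x s" if "s \<in> {1..p-1}" for s
        using xpos[OF that] x0 by (simp add: field_simps)
      ultimately show ?thesis unfolding P_def by (auto intro!: prod.cong)
    qed
    have tt: "(\<Prod>s\<in>{0..p-1}-{t}. (1 - x s)/(x t - x s)) = theta p k t" if t: "t \<in> {1..p-1}" for t
    proof -
      have "{0..p-1}-{t} = insert 0 ({1..p-1}-{t})" using t by auto
      thus ?thesis unfolding thetaL using t x0 by simp
    qed
    have "(\<Sum>t\<in>{0..p-1}. poly 1 (x t) * (\<Prod>s\<in>{0..p-1}-{t}. (1 - x s)/(x t - x s)))
        = P + S"
    proof -
      have "(\<Sum>t\<in>{0..p-1}. poly 1 (x t) * (\<Prod>s\<in>{0..p-1}-{t}. (1 - x s)/(x t - x s)))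
        = (\<Prod>s\<in>{0..p-1}-{0}. (1 - x s)/(x 0 - x s)) + (\<Sum>t\<in>{1..p-1}. (\<Prod>s\<in>{0..p-1}-{t}. (1 - x s)/(x t - x s)))"
        by (subst (1) ins, subst sum.insert) auto
      also have "(\<Sum>t\<in>{1..p-1}. (\<Prod>s\<in>{0..p-1}-{t}. (1 - x s)/(x t - x s))) = S"
        unfolding S_def using tt by (intro sum.cong) auto
      finally show ?thesis using t0 by simp
    qed
    thus ?thesis using lag0 by simp
  qed
  have u01: "0 < 1 / x s \<and> 1 / x s \<le> 1 \<and> 1 \<le> x s" if "s \<in> {1..p-1}" for s
  proof -
    have "x s \<ge> a" using that a1 unfolding x_def by auto
    thus ?thesis using a1 by (simp add: field_simps)
  qed
  have xge: "0 \<le> x s" "1 \<le> x s" "1 / x s \<le> 1" if "s \<in> {1..p-1}" for s using u01[OF that] by auto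
  have lowP: "P \<le> 1 - 1 / a"
  proof -
    have "P = (1 - 1 / x 1) * (\<Prod>s\<in>{1..p-1}-{1}. 1 - 1 / x s)"
      unfolding P_def using p2 by (subst prod.remove[of _ 1]) auto
    also have "(\<Prod>s\<in>{1..p-1}-{1}. 1 - 1 / x s) \<le> 1"
      using xge by (intro prod_le_1) auto
    hence "(1 - 1 / x 1) * (\<Prod>s\<in>{1..p-1}-{1}. 1 - 1 / x s) \<le> 1 - 1 / x 1"
      using u01[of 1] p2 by (intro mult_left_le) auto
    finally show ?thesis unfolding x_def by simp
  qed
  have Slow: "1 / a \<le> S" using SP lowP by simp
  have Sup: "S \<le> ln (2 * real p - 1) / a"
  proof -
    have "S = 1 - (\<Prod>s\<in>{1..p-1}. 1 - 1 / x s)" using SP unfolding P_def by simp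
    also have "\<dots> \<le> (\<Sum>s\<in>{1..p-1}. 1 / x s)"
      using xge by (intro union_bound) auto
    also have "\<dots> = (\<Sum>s=1..p-1. 1 / real s) / a"
      unfolding x_def by (simp add: sum_divide_distrib)
    also have "\<dots> \<le> ln (2 * real (p-1) + 1) / a"
      using a1 harm_bound[of "p-1"] by (simp add: divide_right_mono)
    also have "2 * real (p-1) + 1 = 2 * real p - 1" using p2 by (simp add: of_nat_diff)
    finally show ?thesis .
  qed
  have lnlt: "ln (2 * real p - 1) < a"
  proof -
    have p1: "2 * real p - 1 > 0" using p2 by simp
    have "ln (2 * real p - 1) = (7/4) * ln ((2 * real p - 1) powr (4/7))" by simp
    also have "\<dots> \<le> (7/4) * ((2 * real p - 1) powr (4/7) / exp 1)"
      using p1 by (intro mult_left_mono ln_div_e) auto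
    also have "\<dots> \<le> (7/4) * ((2 * real p) powr (4/7) / exp 1)"
      using p1 by (intro mult_left_mono divide_right_mono powr_mono2) auto
    also have "(2 * real p) powr (4/7) = 2 powr (4/7) * real p powr (4/7)" by (rule powr_mult)
    also have "(7/4) * (2 powr (4/7) * real p powr (4/7) / exp 1) < real p powr (4/7)"
    proof -
      have "(2 powr (4/7::real))^7 = 2 powr ((4/7) * 7)" by (simp add: powr_power)
      also have "\<dots> = 16" by simp
      also have "16 < (153/100::real)^7" by (simp add: power_divide)
      finally have b2: "2 powr (4/7::real) < 153/100"
        by (rule power_less_imp_less_base) simp
      have e27: "exp 1 > (27/10::real)" using e_approx_32 by (simp add: abs_if split: if_split_asm)
      have pp: "real p powr (4/7) > 0" using p2 by simp
      have "(7/4) * (2 powr (4/7) * real p powr (4/7)) < exp 1 * real p powr (4/7)"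
      proof -
        have "(7/4) * (2 powr (4/7) * real p powr (4/7)) = ((7/4) * 2 powr (4/7)) * real p powr (4/7)" by simp
        also have "\<dots> < exp 1 * real p powr (4/7)"
          using b2 e27 pp by (intro mult_strict_right_mono) auto
        finally show ?thesis .
      qed
      thus ?thesis by (simp add: field_simps)
    qed
    also have "real p powr (4/7) \<le> m powr (4/7)" unfolding m_def by (intro powr_mono2) auto
    also have "m powr (4/7) \<le> a" unfolding a_def using m2 e47 by (intro powr_mono) auto
    finally show ?thesis .
  qed
  have a2: "a * a = m powr (4 * real p / (3 * real p + 1))"
  proof -
    have "3 * real p + 1 > 0" by simp
    have "e + e = (2 * real p + 2 * real p) / (3 * real p + 1)" unfolding e_def by (rule add_divide_distrib[symmetric])
    hence "4 * real p / (3 * real p + 1) = e + e" by simp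
    thus ?thesis unfolding a_def by (simp only: powr_add)
  qed
  have thb: "(theta p k t)\<^sup>2 \<le> 16 * (fact (p - 1))\<^sup>2 / ((real t)\<^sup>2 * m powr (4 * real p / (3 * real p + 1)))"
    if t: "t \<in> {1..p-1}" for t
  proof -
    have fin: "finite ({1..p-1}-{t})" by simp
    have r: "\<bar>(1 - x s)/(x t - x s)\<bar> \<le> real s" if s: "s \<in> {1..p-1}-{t}" for s
    proof -
      have ts: "\<bar>real t - real s\<bar> \<ge> 1" using s by auto
      have "\<bar>x t - x s\<bar> = \<bar>real t - real s\<bar> * a" unfolding x_def using a1
        by (simp add: abs_mult left_diff_distrib[symmetric])
      also have "\<dots> \<ge> 1 * a" using ts a1 by (intro mult_right_mono) auto
      finally have d: "\<bar>x t - x s\<bar> \<ge> a" by simp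
      have n: "\<bar>1 - x s\<bar> \<le> real s * a" using xge[of s] s unfolding x_def by auto
      have "\<bar>(1 - x s)/(x t - x s)\<bar> = \<bar>1 - x s\<bar> / \<bar>x t - x s\<bar>" by (simp add: abs_divide)
      also have "\<dots> \<le> (real s * a) / a" using n d a1 by (intro frac_le) auto
      finally show ?thesis using a1 by simp
    qed
    have "\<bar>\<Prod>s\<in>{1..p-1}-{t}. (1 - x s)/(x t - x s)\<bar> \<le> (\<Prod>s\<in>{1..p-1}-{t}. real s)"
      unfolding abs_prod using r by (intro prod_mono) auto
    also have "\<dots> \<le> (\<Prod>s\<in>{1..p-1}. real s)" by (intro prod_mono2) auto
    also have "\<dots> = fact (p-1)" by (simp add: fact_prod)
    finally have pb: "\<bar>\<Prod>s\<in>{1..p-1}-{t}. (1 - x s)/(x t - x s)\<bar> \<le> fact (p-1)" .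
    have xt: "x t = real t * a" unfolding x_def ..
    have xtp: "x t > 0" using xpos[OF t] .
    have "\<bar>theta p k t\<bar> \<le> fact (p-1) / x t"
      unfolding thetaL using pb xtp by (simp add: abs_divide divide_right_mono)
    hence "\<bar>theta p k t\<bar>^2 \<le> (fact (p-1) / x t)^2" by (intro power_mono) auto
    hence "(theta p k t)\<^sup>2 \<le> (fact (p-1))\<^sup>2 / ((real t)\<^sup>2 * (a * a))"
      by (simp add: xt power_divide power_mult_distrib power2_eq_square mult_ac)
    also have "\<dots> \<le> 16 * (fact (p-1))\<^sup>2 / ((real t)\<^sup>2 * (a * a))"
      using a1 by (intro divide_right_mono) auto
    finally show ?thesis unfolding a2 .
  qed
  have lnla: "ln (2 * real p - 1) / a < 1" using lnlt a1 by simp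
  have S1: "S < 1" using Sup lnla by linarith
  have S0: "0 \<le> S" using Slow a1 by (smt (verit) divide_pos_pos)
  have last: "(1 - S) * pseq p (k + 1) \<le> (1 - S / (real p + 1)) * pseq p k"
  proof -
    define b where "b = (real p - 1) / (3 * real p + 1)"
    have b: "0 \<le> b" "b \<le> 1/3" using p2 unfolding b_def by (auto simp: field_simps)
    have pk: "pseq p k = m powr b" unfolding pseq_def m_def b_def ..
    have pk1: "pseq p (k+1) = (m + 1) powr b" unfolding pseq_def m_def b_def by (simp add: add_ac)
    define y where "y = 1 / m"
    have y: "0 < y" unfolding y_def using m2 by simp
    have "(m + 1) powr b = m powr b * (1 + y) powr b"
    proof -
      have "m + 1 = m * (1 + y)" unfolding y_def using m2 by (simp add: field_simps)
      thus ?thesis by (simp add: powr_mult)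
    qed
    also have "(1 + y) powr b \<le> (1 + y) powr (1/3)" using b y by (intro powr_mono) auto
    also have "(1 + y) powr (1/3) \<le> 1 + 2 * y / 3"
    proof -
      have "((1 + y) powr (1/3))^3 = (1 + y) powr ((1/3) * 3)" using y by (simp add: powr_power)
      also have "\<dots> = 1 + y" using y by simp
      also have "\<dots> \<le> (1 + 2 * y / 3)^3"
      proof -
        have "(1 + 2 * y / 3)^3 = 1 + 2 * y + 4/3*y^2 + 8/27*y^3" by (simp add: power3_eq_cube power2_eq_square field_simps)
        thus ?thesis using y by simp
      qed
      finally have c3: "((1 + y) powr (1/3))^Suc 2 \<le> (1 + 2 * y / 3)^Suc 2" by (simp add: numeral_3_eq_3)
      show ?thesis by (rule power_le_imp_le_base[OF c3]) (use y in auto)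
    qed
    finally have mb: "(m + 1) powr b \<le> m powr b * (1 + 2 * y / 3)" using m2 by (simp add: mult_left_mono)
    have ys: "y \<le> S" unfolding y_def using Slow am a1 by (smt (verit) frac_le)
    have key: "(1 - S) * (1 + 2 * y / 3) \<le> 1 - S / (real p + 1)"
    proof -
      have "(1 - S) * (1 + 2 * y / 3) = 1 - S + (1 - S) * (2 * y / 3)" by (simp add: algebra_simps)
      also have "(1 - S) * (2 * y / 3) \<le> 2 * y / 3" using S0 y by (simp add: mult_left_le_one_le)
      also have "2 * y / 3 \<le> 2 * S / 3" using ys by simp
      also have "S / (real p + 1) \<le> S / 3" using S0 p2 by (intro divide_left_mono) auto
      hence "1 - S + 2 * S / 3 \<le> 1 - S / (real p + 1)" by simp
      finally show ?thesis by simp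
    qed
    have "(1 - S) * pseq p (k + 1) \<le> (1 - S) * (m powr b * (1 + 2 * y / 3))"
      unfolding pk1 using mb S1 by (intro mult_left_mono) auto
    also have "\<dots> = ((1 - S) * (1 + 2 * y / 3)) * m powr b" by simp
    also have "\<dots> \<le> (1 - S / (real p + 1)) * m powr b" using key by (intro mult_right_mono) auto
    finally show ?thesis unfolding pk .
  qed
  show ?thesis
  proof (intro conjI)
    show "1 / (2 * a) \<le> S" using Slow a1 by (smt (verit) frac_le)
    show "0 < 1 / (2 * a)" using a1 by simp
    show "ln (2 * real p - 1) / a < 1" using lnlt a1 by simp
  qed (use part1 Sup thb last in auto)
qed



theorem lemma5p5:
  fixes p :: nat
  assumes "p \<ge> 2"
  shows "\<forall>k::nat.
     (\<forall>j\<in>{1..p-1}. (\<Sum>t=1..p-1. theta p k t / (gam p k t) ^ j) = 1)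
   \<and> 1 / (2 * (real k + real p) powr (2 * real p / (3 * real p + 1))) \<le> (\<Sum>t=1..p-1. theta p k t)
   \<and> (\<Sum>t=1..p-1. theta p k t) \<le> ln (2 * real p - 1) / (real k + real p) powr (2 * real p / (3 * real p + 1))
   \<and> 0 < 1 / (2 * (real k + real p) powr (2 * real p / (3 * real p + 1)))
   \<and> ln (2 * real p - 1) / (real k + real p) powr (2 * real p / (3 * real p + 1)) < 1
   \<and> (\<forall>t\<in>{1..p-1}. (theta p k t)\<^sup>2 \<le>
        16 * (fact (p - 1))\<^sup>2 / ((real t)\<^sup>2 * (real k + real p) powr (4 * real p / (3 * real p + 1))))
   \<and> (1 - (\<Sum>t=1..p-1. theta p k t)) * pseq p (k + 1)
       \<le> (1 - (\<Sum>t=1..p-1. theta p k t) / (real p + 1)) * pseq p k"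
  using main_k[OF assms] by blast

end
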